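(* Let $0<\alpha\leq2$, let $Z,\tilde Z$ be independent random variables with characteristic function $u\mapsto e^{-|u|^\alpha}$, let $\phi(x,y)=\mathbb{P}(Z\geq0,\tilde Z\geq0,x^{1/\alpha}Z\leq y^{1/\alpha}\tilde Z)$ for $x,y\geq0$, and let $D=(1+|\tilde Z/Z|^\alpha)^{-1}$. Let $T>0$. Then for $x,y,b>0$ and $0<a\leq T$: (i) $\phi(x,y)+\phi(y,x)=\frac14$; (ii) $\phi(ax,ay)=\phi(x,y)$; (iii) $\int_0^a\phi(a-x,x)\,dx=\frac a8$; (iv) $\int_a^T\phi(x-a,a)\,dx=\frac14\mathbb{E}[\min(T,aD^{-1})]-\frac a4$. *)

theory Defs
  imports "HOL-Probability.Probability"
begin

definition stable_phi ::
  "'a measure \<Rightarrow> ('a \<Rightarrow> real) \<Rightarrow> ('a \<Rightarrow> real) \<Rightarrow> real \<Rightarrow> real \<Rightarrow> real \<Rightarrow> real" where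
  "stable_phi M Z Z' \<alpha> x y =
     measure M {\<omega> \<in> space M. Z \<omega> \<ge> 0 \<and> Z' \<omega> \<ge> 0 \<and>
                 x powr (1 / \<alpha>) * Z \<omega> \<le> y powr (1 / \<alpha>) * Z' \<omega>}"

definition stable_D ::
  "('a \<Rightarrow> real) \<Rightarrow> ('a \<Rightarrow> real) \<Rightarrow> real \<Rightarrow> 'a \<Rightarrow> real" where
  "stable_D Z Z' \<alpha> \<omega> = inverse (1 + \<bar>Z' \<omega> / Z \<omega>\<bar> powr \<alpha>)"

end

theory Submission
  imports Defs "HOL-Probability.Probability"
begin

lemma exp_neg_powr_bound:
  fixes s :: real and k :: nat
  assumes "s \<ge> 0" "k > 0"
  shows "exp (- s) * s ^ k \<le> real k ^ k"
proof -
  have "1 + s / k \<le> exp (s / k)" by (rule exp_ge_add_one_self)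
  hence "s / k \<le> exp (s / k)" by linarith
  hence "(s / k) ^ k \<le> exp (s / k) ^ k"
    using assms by (intro power_mono) auto
  also have "exp (s / k) ^ k = exp s"
    using assms by (simp add: exp_of_nat_mult[symmetric])
  finally have "s ^ k \<le> exp s * real k ^ k"
    using assms by (simp add: power_divide divide_le_eq)
  thus ?thesis by (simp add: exp_minus field_simps)
qed

lemma integrable_exp_neg_abs_powr:
  fixes \<alpha> :: real assumes "\<alpha> > 0"
  shows "integrable lborel (\<lambda>t::real. exp (- (\<bar>t\<bar> powr \<alpha>)))"
proof -
  obtain k :: nat where k: "real k * \<alpha> \<ge> 2" "k > 0"
  proof -
    obtain n :: nat where "2 / \<alpha> \<le> real n" using real_arch_simple by blast
    hence "real (Suc n) * \<alpha> \<ge> 2" using assms by (simp add: divide_le_eq algebra_simps)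
    thus ?thesis using that[of "Suc n"] by blast
  qed
  define C where "C = 2 * max 1 (real k ^ k)"
  have int1: "integrable lborel (\<lambda>x::real. inverse (1 + x^2))"
    using integrable_inverse_1_plus_square by (simp add: set_integrable_def einterval_def)
  have bnd: "norm (exp (- (\<bar>t\<bar> powr \<alpha>))) \<le> C * inverse (1 + t^2)" for t :: real
  proof (cases "\<bar>t\<bar> \<le> 1")
    case True
    have "exp (- (\<bar>t\<bar> powr \<alpha>)) \<le> 1" by simp
    moreover have "1 \<le> C * inverse (1 + t^2)"
    proof -
      have "t^2 \<le> 1" using True abs_square_le_1[of t] by simp
      hence "1 + t^2 \<le> C" unfolding C_def by linarith
      thus ?thesis by (simp add: field_simps add_pos_nonneg)
    qed
    ultimately have "exp (- (\<bar>t\<bar> powr \<alpha>)) \<le> C * inverse (1 + t^2)" by (rule order_trans)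
    thus ?thesis by simp
  next
    case False
    let ?s = "\<bar>t\<bar> powr \<alpha>"
    have s0: "?s \<ge> 0" by simp
    have "?s ^ k = \<bar>t\<bar> powr (real k * \<alpha>)"
      using False by (simp add: powr_realpow[symmetric] powr_powr mult.commute)
    also have "\<dots> \<ge> \<bar>t\<bar> powr 2"
      using False k by (intro powr_mono) auto
    finally have sk: "?s ^ k \<ge> t^2" using False by (simp add: powr_realpow)
    have t2: "t^2 > 1" using False abs_square_le_1[of t] by simp
    have "exp (- ?s) * t^2 \<le> exp (- ?s) * ?s ^ k" using sk by (intro mult_left_mono) auto
    also have "\<dots> \<le> real k ^ k" using exp_neg_powr_bound[OF s0 k(2)] .
    finally have "exp (- ?s) * t^2 \<le> real k ^ k" .
    hence "exp (- ?s) \<le> real k ^ k / t^2" using t2 False by (simp add: le_divide_eq)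
    also have "\<dots> \<le> C * inverse (1 + t^2)"
    proof -
      define M where "M = max 1 (real k ^ k)"
      have M: "real k ^ k \<le> M" "M \<ge> 0" unfolding M_def by auto
      have "real k ^ k * (1 + t^2) \<le> M * (1 + t^2)"
        using M by (intro mult_right_mono) auto
      also have "\<dots> \<le> M * (2 * t^2)" using M t2 by (intro mult_left_mono) auto
      finally have "real k ^ k * (1 + t^2) \<le> 2 * max 1 (real k ^ k) * t^2"
        unfolding M_def by simp
      hence h: "real k ^ k * (1 + t^2) \<le> C * t^2" unfolding C_def by simp
      have p: "t^2 > 0" "1 + t^2 > 0" using t2 by auto
      have "real k ^ k / t^2 = (real k ^ k * (1 + t^2)) / (t^2 * (1 + t^2))" using p by simp
      also have "\<dots> \<le> (C * t^2) / (t^2 * (1 + t^2))" using h p by (intro divide_right_mono) auto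
      also have "\<dots> = (t^2 * C) / (t^2 * (1 + t^2))" by (simp add: mult.commute)
      also have "\<dots> = C / (1 + t^2)" using p(1) by (intro mult_divide_mult_cancel_left) simp
      also have "\<dots> = C * inverse (1 + t^2)" by (simp add: divide_inverse)
      finally show ?thesis .
    qed
    finally show ?thesis by simp
  qed
  show ?thesis
  proof (rule Bochner_Integration.integrable_bound)
    show "integrable lborel (\<lambda>t. C * inverse (1 + t^2))" using int1 by simp
    show "AE t in lborel. norm (exp (- (\<bar>t\<bar> powr \<alpha>))) \<le> norm (C * inverse (1 + t^2))"
    proof (intro AE_I2)
      fix t :: real
      have "norm (exp (- (\<bar>t\<bar> powr \<alpha>))) \<le> C * inverse (1 + t^2)" by (rule bnd)
      moreover have "C * inverse (1 + t^2) \<le> norm (C * inverse (1 + t^2))" by simp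
      ultimately show "norm (exp (- (\<bar>t\<bar> powr \<alpha>))) \<le> norm (C * inverse (1 + t^2))" by linarith
    qed
  qed simp
qed

lemma no_atoms:
  fixes \<mu> :: "real measure" and \<alpha> c :: real
  assumes rd: "real_distribution \<mu>" and \<alpha>: "\<alpha> > 0"
    and ch: "\<And>u. char \<mu> u = exp (- complex_of_real (\<bar>u\<bar> powr \<alpha>))"
  shows "measure \<mu> {c} = 0"
proof -
  interpret real_distribution \<mu> by fact
  define E where "E = (\<lambda>t::real. exp (- (\<bar>t\<bar> powr \<alpha>)))"
  have intE: "integrable lborel E" unfolding E_def by (rule integrable_exp_neg_abs_powr[OF \<alpha>])
  define K where "K = integral\<^sup>L lborel E"
  have K0: "K \<ge> 0" unfolding K_def E_def by (intro integral_nonneg_AE) auto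
  have main: "measure \<mu> {a<..b} \<le> (b - a) * K / (2 * pi)"
    if ab: "a \<le> b" "measure \<mu> {a} = 0" "measure \<mu> {b} = 0" for a b :: real
  proof -
    define F where "F = (\<lambda>t::real. (iexp (-(t * a)) - iexp (-(t * b))) / (\<i> * t))"
    have lim: "(\<lambda>T::nat. 1 / (2 * pi) * (CLBINT t=-T..T. F t * char \<mu> t)) \<longlonglongrightarrow> complex_of_real (measure \<mu> {a<..b})"
      using Levy_Inversion[OF ab] unfolding F_def by simp
    have Fb: "norm (F t) \<le> b - a" for t
    proof (cases "t = 0")
      case True thus ?thesis using ab by (simp add: F_def)
    next
      case False
      have "F t = (iexp (t * (-a)) - iexp (t * (-b))) / (\<i> * t)" unfolding F_def by simp
      thus ?thesis using Levy_Inversion_aux2[of "-b" "-a" t] ab False by simp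
    qed
    have nch: "norm (char \<mu> t) = E t" for t
      unfolding ch E_def by (simp add: norm_exp_eq_Re)
    have Fm: "F \<in> borel_measurable borel" unfolding F_def by measurable
    have bnd: "norm (1 / (2 * pi) * (CLBINT t=-T..T. F t * char \<mu> t)) \<le> (b - a) * K / (2 * pi)" for T :: nat
    proof -
      define A where "A = einterval (- real T) (real T)"
      have "(CLBINT t=-T..T. F t * char \<mu> t) = (\<integral>t. indicator A t *\<^sub>R (F t * char \<mu> t) \<partial>lborel)"
        unfolding A_def interval_lebesgue_integral_def set_lebesgue_integral_def by simp
      hence "norm (CLBINT t=-T..T. F t * char \<mu> t) \<le> (\<integral>t. norm (indicator A t *\<^sub>R (F t * char \<mu> t)) \<partial>lborel)"
        using integral_norm_bound by metis
      also have "\<dots> \<le> (\<integral>t. (b - a) * E t \<partial>lborel)"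
      proof (rule integral_mono)
        show "integrable lborel (\<lambda>t. (b - a) * E t)" using intE by simp
        have pw: "norm (indicator A t *\<^sub>R (F t * char \<mu> t)) \<le> (b - a) * E t" for t
        proof -
          have "norm (indicator A t *\<^sub>R (F t * char \<mu> t)) \<le> norm (F t * char \<mu> t)"
            by (simp add: indicator_def)
          also have "\<dots> = norm (F t) * E t" by (simp add: norm_mult nch)
          also have "\<dots> \<le> (b - a) * E t" using Fb by (intro mult_right_mono) (auto simp: E_def)
          finally show ?thesis .
        qed
        show "integrable lborel (\<lambda>t. norm (indicator A t *\<^sub>R (F t * char \<mu> t)))"
        proof (rule Bochner_Integration.integrable_bound[where f="\<lambda>t. (b - a) * E t"])
          show "integrable lborel (\<lambda>t. (b - a) * E t)" using intE by simp
          show "AE t in lborel. norm (norm (indicator A t *\<^sub>R (F t * char \<mu> t))) \<le> norm ((b - a) * E t)"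
            using pw by (intro AE_I2) (smt (verit) norm_ge_zero real_norm_def)
          show "(\<lambda>t. norm (indicator A t *\<^sub>R (F t * char \<mu> t))) \<in> borel_measurable lborel"
            unfolding A_def using Fm by measurable
        qed
        show "\<And>t. t \<in> space lborel \<Longrightarrow> norm (indicator A t *\<^sub>R (F t * char \<mu> t)) \<le> (b - a) * E t"
          using pw by blast
      qed
      also have "\<dots> = (b - a) * K" unfolding K_def by simp
      finally have X: "norm (CLBINT t=-T..T. F t * char \<mu> t) \<le> (b - a) * K" .
      have "norm (1 / (2 * pi) * (CLBINT t=-T..T. F t * char \<mu> t)) = norm (CLBINT t=-T..T. F t * char \<mu> t) / (2 * pi)"
        by (simp add: norm_mult norm_divide)
      also have "\<dots> \<le> (b - a) * K / (2 * pi)" using X by (intro divide_right_mono) auto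
      finally show ?thesis .
    qed
    have "norm (complex_of_real (measure \<mu> {a<..b})) \<le> (b - a) * K / (2 * pi)"
      by (rule Lim_norm_ubound[OF _ lim]) (use bnd in auto)
    thus ?thesis by simp
  qed
  have near: "\<exists>x\<in>{l<..<r}. measure \<mu> {x} = 0" if "l < r" for l r :: real
  proof (rule ccontr)
    assume "\<not> ?thesis"
    hence "{l<..<r} \<subseteq> {x. measure \<mu> {x} > 0}"
      using measure_nonneg[of \<mu>] by (force simp: order_le_less)
    hence "countable {l<..<r}" using countable_atoms countable_subset by blast
    thus False using uncountable_open_interval that by blast
  qed
  show ?thesis
  proof (rule ccontr)
    define p where "p = measure \<mu> {c}"
    assume "measure \<mu> {c} \<noteq> 0"
    hence p0: "p > 0" unfolding p_def using measure_nonneg[of \<mu> "{c}"] by linarith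
    define q where "q = 2 * (K + 1)"
    have q0: "q > 0" unfolding q_def using K0 by simp
    define h where "h = p * pi / q"
    have h0: "h > 0" unfolding h_def using p0 q0 by (auto intro!: divide_pos_pos)
    obtain a where a: "a \<in> {c - h<..<c}" "measure \<mu> {a} = 0" using near[of "c - h" c] h0 by auto
    obtain b where b: "b \<in> {c<..<c + h}" "measure \<mu> {b} = 0" using near[of c "c + h"] h0 by auto
    have "p \<le> measure \<mu> {a<..b}" unfolding p_def using a b by (intro finite_measure_mono) auto
    also have "\<dots> \<le> (b - a) * K / (2 * pi)" using main[of a b] a b by auto
    also have "\<dots> \<le> (2 * h) * K / (2 * pi)" using a b K0 by (intro divide_right_mono mult_right_mono) auto
    also have "\<dots> = p * K / q" unfolding h_def using q0 by (simp add: field_simps)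
    also have "\<dots> < p" using p0 K0 q0 unfolding q_def by (simp add: field_simps add_nonneg_pos)
    finally show False by simp
  qed
qed

locale symd = real_distribution \<mu> for \<mu> :: "real measure" +
  assumes sym_mu: "distr \<mu> borel uminus = \<mu>" and atomless: "\<And>c. measure \<mu> {c} = 0"
begin

abbreviation J where "J \<equiv> \<mu> \<Otimes>\<^sub>M \<mu>"

sublocale P: pair_prob_space \<mu> \<mu> by unfold_locales

lemma sets_J: "sets J = sets (borel \<Otimes>\<^sub>M borel)"
  by (intro sets_pair_measure_cong) auto

lemma space_J[simp]: "space J = UNIV"
  by (simp add: space_pair_measure)

lemma emeasure_single[simp]: "emeasure \<mu> {c} = 0"
  using atomless[of c] by (simp add: emeasure_eq_measure)

lemma null_line:
  assumes "x' \<noteq> 0 \<or> y' \<noteq> 0"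
  shows "{p. x' * fst p = y' * snd p} \<in> null_sets J"
proof -
  let ?S = "{p. x' * fst p = y' * snd p}"
  have S: "?S \<in> sets J"
  proof -
    have "{p \<in> space (borel \<Otimes>\<^sub>M borel). x' * fst p = y' * snd p} \<in> sets (borel \<Otimes>\<^sub>M borel)" by measurable
    thus ?thesis by (simp add: sets_J space_pair_measure)
  qed
  have "emeasure J ?S = (\<integral>\<^sup>+x. emeasure \<mu> (Pair x -` ?S) \<partial>\<mu>)"
    by (rule emeasure_pair_measure_alt[OF S])
  also have "\<dots> = 0"
  proof (cases "y' = 0")
    case False
    have "Pair x -` ?S = {x' * x / y'}" for x using False by (auto simp: field_simps)
    thus ?thesis by simp
  next
    case True
    hence x': "x' \<noteq> 0" using assms by auto
    have "Pair x -` ?S = (if x = 0 then UNIV else {})" for x using True x' by auto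
    hence "(\<integral>\<^sup>+x. emeasure \<mu> (Pair x -` ?S) \<partial>\<mu>) = (\<integral>\<^sup>+x. emeasure \<mu> UNIV * indicator {0} x \<partial>\<mu>)"
      by (intro nn_integral_cong) (auto simp: indicator_def)
    also have "\<dots> = 0" by (subst nn_integral_cmult_indicator) auto
    finally show ?thesis .
  qed
  finally show ?thesis using S by (intro null_setsI)
qed

lemma null_axes: "{p. fst p = 0 \<or> snd p = 0} \<in> null_sets J"
proof -
  have A0: "{p::real\<times>real. 1 * fst p = 0 * snd p} \<in> null_sets J" by (rule null_line) simp
  have A1: "{p::real\<times>real. 1 * fst p = 0 * snd p} = {p::real\<times>real. fst p = 0}" by simp
  have B0: "{p::real\<times>real. 0 * fst p = 1 * snd p} \<in> null_sets J" by (rule null_line) simp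
  have B1: "{p::real\<times>real. 0 * fst p = 1 * snd p} = {p::real\<times>real. snd p = 0}" by auto
  have "{p. fst p = 0 \<or> snd p = 0} = {p::real\<times>real. 1 * fst p = 0 * snd p} \<union> {p::real\<times>real. 0 * fst p = 1 * snd p}"
    unfolding A1 B1 by auto
  also have "\<dots> \<in> null_sets J" by (rule null_sets.Un[OF A0 B0])
  finally show ?thesis .
qed

lemma inv_neg1: "distr J J (\<lambda>(x, y). (- x, y)) = J"
proof -
  have "distr \<mu> borel uminus \<Otimes>\<^sub>M distr \<mu> borel (\<lambda>x. x) = distr (\<mu> \<Otimes>\<^sub>M \<mu>) (borel \<Otimes>\<^sub>M borel) (\<lambda>(x, y). (- x, y))"
    by (rule pair_measure_distr) (auto simp: distr_id2 intro: sigma_finite_measure_axioms)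
  hence "J = distr J (borel \<Otimes>\<^sub>M borel) (\<lambda>(x, y). (- x, y))" by (simp add: sym_mu distr_id2)
  also have "\<dots> = distr J J (\<lambda>(x, y). (- x, y))" by (intro distr_cong) auto
  finally show ?thesis ..
qed

lemma inv_neg2: "distr J J (\<lambda>(x, y). (x, - y)) = J"
proof -
  have "distr \<mu> borel (\<lambda>x. x) \<Otimes>\<^sub>M distr \<mu> borel uminus = distr (\<mu> \<Otimes>\<^sub>M \<mu>) (borel \<Otimes>\<^sub>M borel) (\<lambda>(x, y). (x, - y))"
    by (rule pair_measure_distr) (auto simp: sym_mu intro: sigma_finite_measure_axioms)
  hence "J = distr J (borel \<Otimes>\<^sub>M borel) (\<lambda>(x, y). (x, - y))" by (simp add: sym_mu distr_id2)
  also have "\<dots> = distr J J (\<lambda>(x, y). (x, - y))" by (intro distr_cong) auto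
  finally show ?thesis ..
qed

lemma inv_swap: "distr J J (\<lambda>(x, y). (y, x)) = J"
  by (rule P.distr_pair_swap[symmetric])

lemma measJ: "measurable J J = measurable (borel \<Otimes>\<^sub>M borel) (borel \<Otimes>\<^sub>M borel)"
  by (rule measurable_cong_sets[OF sets_J sets_J])

lemma bmeasJ: "borel_measurable J = borel_measurable (borel \<Otimes>\<^sub>M borel)"
  by (rule measurable_cong_sets[OF sets_J refl])

lemma integral_inv:
  fixes g :: "real \<times> real \<Rightarrow> real"
  assumes "distr J J f = J" "f \<in> measurable J J" "g \<in> borel_measurable J"
  shows "integral\<^sup>L J (\<lambda>p. g (f p)) = integral\<^sup>L J g"
  using Bochner_Integration.integral_distr[OF assms(2,3)] assms(1) by simp

lemma measure_inv:
  assumes "distr J J f = J" "f \<in> measurable J J" "S \<in> sets J"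
  shows "measure J (f -` S) = measure J S"
  using Measure_Space.measure_distr[OF assms(2,3)] assms(1) by simp

lemma quadrant:
  fixes g :: "real \<times> real \<Rightarrow> real"
  assumes gm: "g \<in> borel_measurable (borel \<Otimes>\<^sub>M borel)" and gi: "integrable J g"
    and g1: "\<And>x y. g (- x, y) = g (x, y)" and g2: "\<And>x y. g (x, - y) = g (x, y)"
  shows "integral\<^sup>L J (\<lambda>p. g p * indicator {p. fst p > 0 \<and> snd p > 0} p) = integral\<^sup>L J g / 4"
proof -
  define I where "I = (\<lambda>S. integral\<^sup>L J (\<lambda>p. g p * indicator S p))"
  define Q1 where "Q1 = {p::real\<times>real. fst p > 0 \<and> snd p > 0}"
  define Q2 where "Q2 = {p::real\<times>real. fst p < 0 \<and> snd p > 0}"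
  define Q3 where "Q3 = {p::real\<times>real. fst p > 0 \<and> snd p < 0}"
  define Q4 where "Q4 = {p::real\<times>real. fst p < 0 \<and> snd p < 0}"
  define Ax where "Ax = {p::real\<times>real. fst p = 0 \<or> snd p = 0}"
  have sets: "Q1 \<in> sets J" "Q2 \<in> sets J" "Q3 \<in> sets J" "Q4 \<in> sets J" "Ax \<in> sets J"
  proof -
    let ?B = "borel \<Otimes>\<^sub>M borel :: (real \<times> real) measure"
    have "{p \<in> space ?B. fst p > 0 \<and> snd p > 0} \<in> sets ?B" by measurable
    moreover have "{p \<in> space ?B. fst p < 0 \<and> snd p > 0} \<in> sets ?B" by measurable
    moreover have "{p \<in> space ?B. fst p > 0 \<and> snd p < 0} \<in> sets ?B" by measurable
    moreover have "{p \<in> space ?B. fst p < 0 \<and> snd p < 0} \<in> sets ?B" by measurable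
    moreover have "{p \<in> space ?B. fst p = 0 \<or> snd p = 0} \<in> sets ?B" by measurable
    ultimately show "Q1 \<in> sets J" "Q2 \<in> sets J" "Q3 \<in> sets J" "Q4 \<in> sets J" "Ax \<in> sets J"
      unfolding Q1_def Q2_def Q3_def Q4_def Ax_def sets_J by (simp_all add: space_pair_measure)
  qed
  have ints: "integrable J (\<lambda>p. g p * indicator S p)" if "S \<in> sets J" for S
    using integrable_real_mult_indicator[OF that gi] .
  have m1: "(\<lambda>(x::real, y::real). (- x, y)) \<in> measurable J J" unfolding measJ by measurable
  have m2: "(\<lambda>(x::real, y::real). (x, - y)) \<in> measurable J J" unfolding measJ by measurable
  have gmJ: "(\<lambda>p. g p * indicator S p) \<in> borel_measurable J" if "S \<in> sets J" for S
    unfolding bmeasJ using gm borel_measurable_indicator[of S "borel \<Otimes>\<^sub>M borel"] that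
    by (simp add: sets_J borel_measurable_times)
  have "I Q2 = integral\<^sup>L J (\<lambda>p. (\<lambda>p. g p * indicator Q1 p) ((\<lambda>(x, y). (- x, y)) p))"
    unfolding I_def
    by (intro Bochner_Integration.integral_cong refl) (auto simp: g1 Q1_def Q2_def indicator_def split: prod.splits)
  also have "\<dots> = I Q1" unfolding I_def by (rule integral_inv[OF inv_neg1 m1 gmJ[OF sets(1)]])
  finally have e2: "I Q2 = I Q1" .
  have "I Q3 = integral\<^sup>L J (\<lambda>p. (\<lambda>p. g p * indicator Q1 p) ((\<lambda>(x, y). (x, - y)) p))"
    unfolding I_def
    by (intro Bochner_Integration.integral_cong refl) (auto simp: g2 Q1_def Q3_def indicator_def split: prod.splits)
  also have "\<dots> = I Q1" unfolding I_def by (rule integral_inv[OF inv_neg2 m2 gmJ[OF sets(1)]])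
  finally have e3: "I Q3 = I Q1" .
  have "I Q4 = integral\<^sup>L J (\<lambda>p. (\<lambda>p. g p * indicator Q3 p) ((\<lambda>(x, y). (- x, y)) p))"
    unfolding I_def
    by (intro Bochner_Integration.integral_cong refl) (auto simp: g1 Q3_def Q4_def indicator_def split: prod.splits)
  also have "\<dots> = I Q3" unfolding I_def by (rule integral_inv[OF inv_neg1 m1 gmJ[OF sets(3)]])
  finally have e4: "I Q4 = I Q1" using e3 by simp
  have e5: "I Ax = 0" unfolding I_def
  proof (rule integral_eq_zero_AE)
    show "AE p in J. g p * indicator Ax p = 0"
      by (rule AE_I'[OF null_axes]) (auto simp: Ax_def indicator_def)
  qed
  have "integral\<^sup>L J g = integral\<^sup>L J (\<lambda>p. g p * indicator Q1 p + g p * indicator Q2 p + g p * indicator Q3 p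
      + g p * indicator Q4 p + g p * indicator Ax p)"
    by (intro Bochner_Integration.integral_cong refl)
       (auto simp: Q1_def Q2_def Q3_def Q4_def Ax_def indicator_def)
  also have "\<dots> = I Q1 + I Q2 + I Q3 + I Q4 + I Ax"
    unfolding I_def using ints sets by (simp add: Bochner_Integration.integral_add)
  finally show ?thesis using e2 e3 e4 e5 unfolding I_def Q1_def by simp
qed

end

context symd begin

lemma pJ: "prob_space J"
  by (rule prob_space_pair) (rule prob_space_axioms)+

lemma sfJ: "sigma_finite_measure J"
  by (rule prob_space_imp_sigma_finite[OF pJ])

lemma fmJ: "fmeasurable J = sets J"
  by (rule finite_measure.fmeasurable_eq_sets[OF prob_space.axioms(1)[OF pJ]])

lemma measJ_1: "measure J UNIV = 1"
  using prob_space.prob_space[OF pJ] by simp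

definition phq :: "real \<Rightarrow> real \<Rightarrow> real" where
  "phq x' y' = measure J {p. 0 \<le> fst p \<and> 0 \<le> snd p \<and> x' * fst p \<le> y' * snd p}"

lemma setsJ_I:
  assumes "{p \<in> space (borel \<Otimes>\<^sub>M borel). P p} \<in> sets (borel \<Otimes>\<^sub>M borel)"
  shows "{p. P p} \<in> sets J"
  using assms by (simp add: sets_J space_pair_measure)

lemma AE_not_axes: "AE p in J. fst p \<noteq> 0 \<and> snd p \<noteq> 0"
  by (rule AE_I'[OF null_axes]) auto

lemma measure_Q1: "measure J {p. fst p > 0 \<and> snd p > 0} = 1 / 4"
proof -
  have "integral\<^sup>L J (\<lambda>p. (\<lambda>_. 1::real) p * indicator {p. fst p > 0 \<and> snd p > 0} p) = integral\<^sup>L J (\<lambda>_. 1::real) / 4"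
    by (rule quadrant) auto
  moreover have "{p. fst p > 0 \<and> snd p > 0} \<in> sets J" by (rule setsJ_I) measurable
  ultimately show ?thesis using measJ_1 by simp
qed

lemma measure_Q: "measure J {p. 0 \<le> fst p \<and> 0 \<le> snd p} = 1 / 4"
proof -
  have "measure J {p. 0 \<le> fst p \<and> 0 \<le> snd p} = measure J {p. fst p > 0 \<and> snd p > 0}"
  proof (rule measure_eq_AE)
    show "AE p in J. (p \<in> {p. 0 \<le> fst p \<and> 0 \<le> snd p}) = (p \<in> {p. 0 < fst p \<and> 0 < snd p})"
      using AE_not_axes by eventually_elim auto
    show "{p. 0 \<le> fst p \<and> 0 \<le> snd p} \<in> sets J" by (rule setsJ_I) measurable
    show "{p. 0 < fst p \<and> 0 < snd p} \<in> sets J" by (rule setsJ_I) measurable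
  qed
  thus ?thesis using measure_Q1 by simp
qed

lemma phq_sum:
  assumes "x' \<noteq> 0 \<or> y' \<noteq> 0"
  shows "phq x' y' + phq y' x' = 1 / 4"
proof -
  define A where "A = {p::real\<times>real. 0 \<le> fst p \<and> 0 \<le> snd p \<and> x' * fst p \<le> y' * snd p}"
  define B' where "B' = {p::real\<times>real. 0 \<le> fst p \<and> 0 \<le> snd p \<and> y' * fst p \<le> x' * snd p}"
  define B where "B = {p::real\<times>real. 0 \<le> fst p \<and> 0 \<le> snd p \<and> y' * snd p \<le> x' * fst p}"
  have sA: "A \<in> sets J" unfolding A_def by (rule setsJ_I) measurable
  have sB': "B' \<in> sets J" unfolding B'_def by (rule setsJ_I) measurable
  have sB: "B \<in> sets J" unfolding B_def by (rule setsJ_I) measurable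
  have msw: "(\<lambda>(x::real, y::real). (y, x)) \<in> measurable J J" unfolding measJ by measurable
  have "measure J B' = measure J ((\<lambda>(x, y). (y, x)) -` B')"
    by (rule measure_inv[OF inv_swap msw sB', symmetric])
  also have "(\<lambda>(x, y). (y, x)) -` B' = B" unfolding B_def B'_def by auto
  finally have eB: "measure J B' = measure J B" .
  have "A \<union> B = {p. 0 \<le> fst p \<and> 0 \<le> snd p}" unfolding A_def B_def by auto
  hence "1 / 4 = measure J (A \<union> B)" using measure_Q by simp
  also have "\<dots> = measure J A + measure J B - measure J (A \<inter> B)"
    using sA sB by (intro measure_Un3) (auto simp: fmJ)
  also have "measure J (A \<inter> B) = 0"
  proof -
    have "A \<inter> B \<subseteq> {p. x' * fst p = y' * snd p}" unfolding A_def B_def by auto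
    hence "A \<inter> B \<in> null_sets J" using null_line[OF assms] sA sB by (blast intro: null_sets_subset)
    thus ?thesis by (simp add: measure_def null_sets_def)
  qed
  finally show ?thesis unfolding phq_def using eB unfolding A_def B'_def by simp
qed

lemma phq_measurable:
  fixes u v :: "real \<Rightarrow> real"
  assumes [measurable]: "u \<in> borel_measurable borel" "v \<in> borel_measurable borel"
  shows "(\<lambda>t. phq (u t) (v t)) \<in> borel_measurable borel"
proof -
  define S where "S = {q::real\<times>real\<times>real. 0 \<le> fst (snd q) \<and> 0 \<le> snd (snd q) \<and> u (fst q) * fst (snd q) \<le> v (fst q) * snd (snd q)}"
  have "{q \<in> space (borel \<Otimes>\<^sub>M (borel \<Otimes>\<^sub>M borel)). 0 \<le> fst (snd q) \<and> 0 \<le> snd (snd q) \<and> u (fst q) * fst (snd q) \<le> v (fst q) * snd (snd q)} \<in> sets (borel \<Otimes>\<^sub>M (borel \<Otimes>\<^sub>M borel))"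
    by measurable
  hence "S \<in> sets (borel \<Otimes>\<^sub>M (borel \<Otimes>\<^sub>M borel))" unfolding S_def by (simp add: space_pair_measure)
  moreover have "sets (borel \<Otimes>\<^sub>M J) = sets (borel \<Otimes>\<^sub>M (borel \<Otimes>\<^sub>M borel))"
    by (intro sets_pair_measure_cong refl sets_J)
  ultimately have "S \<in> sets (borel \<Otimes>\<^sub>M J)" by simp
  hence "(\<lambda>t. emeasure J (Pair t -` S)) \<in> borel_measurable borel"
    by (rule sigma_finite_measure.measurable_emeasure_Pair[OF sfJ])
  hence "(\<lambda>t. enn2real (emeasure J (Pair t -` S))) \<in> borel_measurable borel" by measurable
  moreover have "enn2real (emeasure J (Pair t -` S)) = phq (u t) (v t)" for t
    unfolding phq_def S_def measure_def by (simp add: vimage_def)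
  ultimately show ?thesis by simp
qed

end

lemma key_powr:
  fixes \<alpha> s a x y :: real
  assumes "\<alpha> > 0" "s > 0" "a > 0" "x > 0" "y > 0"
  shows "s powr (1 / \<alpha>) * x \<le> a powr (1 / \<alpha>) * y \<longleftrightarrow> s \<le> a * (y / x) powr \<alpha>"
proof -
  define u where "u = s powr (1 / \<alpha>)"
  define v where "v = a powr (1 / \<alpha>) * (y / x)"
  have u0: "u > 0" unfolding u_def using assms by simp
  have v0: "v > 0" unfolding v_def using assms by simp
  have "s powr (1 / \<alpha>) * x \<le> a powr (1 / \<alpha>) * y \<longleftrightarrow> u \<le> v"
    unfolding u_def v_def using assms by (simp add: field_simps)
  also have "\<dots> \<longleftrightarrow> u powr \<alpha> \<le> v powr \<alpha>"
  proof
    assume "u \<le> v" thus "u powr \<alpha> \<le> v powr \<alpha>" using u0 assms by (intro powr_mono2) auto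
  next
    assume h: "u powr \<alpha> \<le> v powr \<alpha>"
    show "u \<le> v"
    proof (rule ccontr)
      assume "\<not> u \<le> v"
      hence "v powr \<alpha> < u powr \<alpha>" using v0 assms by (intro powr_less_mono2) auto
      thus False using h by simp
    qed
  qed
  also have "u powr \<alpha> = s" unfolding u_def using assms by (simp add: powr_powr)
  also have "v powr \<alpha> = a * (y / x) powr \<alpha>"
    unfolding v_def by (subst powr_mult) (use assms in \<open>auto simp: powr_powr\<close>)
  finally show ?thesis .
qed

context symd begin

lemma phq_bounds: "0 \<le> phq x y" "phq x y \<le> 1"
  unfolding phq_def using prob_space.prob_le_1[OF pJ] by auto

lemma int_iii:
  fixes a r :: real
  assumes a: "a > 0"
  shows "(LBINT t=0..a. phq ((a - t) powr r) (t powr r)) = a / 8"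
proof -
  define f where "f = (\<lambda>t. phq ((a - t) powr r) (t powr r))"
  define g where "g = (\<lambda>t. phq (t powr r) ((a - t) powr r))"
  have fm: "f \<in> borel_measurable borel" unfolding f_def by (intro phq_measurable) measurable
  have gm: "g \<in> borel_measurable borel" unfolding g_def by (intro phq_measurable) measurable
  have fi: "integrable lborel (\<lambda>t. indicator {0<..<a} t *\<^sub>R f t)"
    by (rule integrableI_bounded_set_indicator[where B=1]) (use fm a in \<open>auto simp: f_def phq_bounds abs_le_iff\<close>)
  have gi: "integrable lborel (\<lambda>t. indicator {0<..<a} t *\<^sub>R g t)"
    by (rule integrableI_bounded_set_indicator[where B=1]) (use gm a in \<open>auto simp: g_def phq_bounds abs_le_iff\<close>)
  have I1: "(LBINT t=0..a. f t) = (\<integral>t. indicator {0<..<a} t *\<^sub>R f t \<partial>lborel)"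
  proof -
    have "einterval 0 (ereal a) = {0<..<a}" by (auto simp: einterval_def)
    thus ?thesis using a by (simp add: interval_lebesgue_integral_def set_lebesgue_integral_def)
  qed
  have "(\<integral>t. indicator {0<..<a} t *\<^sub>R f t \<partial>lborel)
      = \<bar>-1\<bar> *\<^sub>R (\<integral>t. indicator {0<..<a} (a + -1 * t) *\<^sub>R f (a + -1 * t) \<partial>lborel)"
    by (rule lborel_integral_real_affine) simp
  also have "\<dots> = (\<integral>t. indicator {0<..<a} t *\<^sub>R g t \<partial>lborel)"
    by (simp only: abs_minus_cancel abs_one scaleR_one)
       (intro Bochner_Integration.integral_cong refl, auto simp: f_def g_def indicator_def)
  finally have fg: "(\<integral>t. indicator {0<..<a} t *\<^sub>R f t \<partial>lborel) = (\<integral>t. indicator {0<..<a} t *\<^sub>R g t \<partial>lborel)" .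
  have "(\<integral>t. indicator {0<..<a} t *\<^sub>R f t \<partial>lborel) + (\<integral>t. indicator {0<..<a} t *\<^sub>R g t \<partial>lborel)
      = (\<integral>t. indicator {0<..<a} t *\<^sub>R f t + indicator {0<..<a} t *\<^sub>R g t \<partial>lborel)"
    using fi gi by (rule Bochner_Integration.integral_add[symmetric])
  also have "\<dots> = (\<integral>t. indicator {0<..<a} t * (1 / 4) \<partial>lborel)"
  proof (intro Bochner_Integration.integral_cong refl)
    fix t
    show "indicator {0<..<a} t *\<^sub>R f t + indicator {0<..<a} t *\<^sub>R g t = indicator {0<..<a} t * (1 / 4)"
    proof (cases "t \<in> {0<..<a}")
      case True
      hence "(a - t) powr r \<noteq> 0" by simp
      hence "f t + g t = 1 / 4" unfolding f_def g_def by (intro phq_sum) simp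
      thus ?thesis using True by (simp add: algebra_simps)
    qed simp
  qed
  also have "\<dots> = a / 4" using a by simp
  finally show ?thesis using I1 fg unfolding f_def by simp
qed

end

context symd begin

lemma finJ: "finite_measure J" by (rule prob_space.axioms(1)[OF pJ])

lemma sets_lJ: "sets (lborel \<Otimes>\<^sub>M J) = sets (borel \<Otimes>\<^sub>M (borel \<Otimes>\<^sub>M borel))"
  by (intro sets_pair_measure_cong sets_lborel sets_J)

lemma meas_le_measurable:
  fixes h :: "real \<times> real \<Rightarrow> real"
  assumes [measurable]: "h \<in> borel_measurable (borel \<Otimes>\<^sub>M borel)"
  shows "(\<lambda>t. measure J {p. t \<le> h p}) \<in> borel_measurable borel"
proof -
  define S where "S = {q::real\<times>real\<times>real. fst q \<le> h (snd q)}"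
  have "{q \<in> space (borel \<Otimes>\<^sub>M (borel \<Otimes>\<^sub>M borel)). fst q \<le> h (snd q)} \<in> sets (borel \<Otimes>\<^sub>M (borel \<Otimes>\<^sub>M borel))"
    by measurable
  hence "S \<in> sets (borel \<Otimes>\<^sub>M (borel \<Otimes>\<^sub>M borel))" unfolding S_def by (simp add: space_pair_measure)
  moreover have "sets (borel \<Otimes>\<^sub>M J) = sets (borel \<Otimes>\<^sub>M (borel \<Otimes>\<^sub>M borel))"
    by (intro sets_pair_measure_cong refl sets_J)
  ultimately have "S \<in> sets (borel \<Otimes>\<^sub>M J)" by simp
  hence "(\<lambda>t. emeasure J (Pair t -` S)) \<in> borel_measurable borel"
    by (rule sigma_finite_measure.measurable_emeasure_Pair[OF sfJ])
  hence "(\<lambda>t. enn2real (emeasure J (Pair t -` S))) \<in> borel_measurable borel" by measurable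
  moreover have "enn2real (emeasure J (Pair t -` S)) = measure J {p. t \<le> h p}" for t
    unfolding S_def measure_def by (simp add: vimage_def)
  ultimately show ?thesis by simp
qed

lemma layer:
  fixes h :: "real \<times> real \<Rightarrow> real" and a T :: real
  assumes hm [measurable]: "h \<in> borel_measurable (borel \<Otimes>\<^sub>M borel)"
    and hge: "\<And>p. a \<le> h p" and aT: "a \<le> T" and a0: "0 \<le> a"
  shows "(\<integral>t. indicator {a<..<T} t * measure J {p. t \<le> h p} \<partial>lborel) = integral\<^sup>L J (\<lambda>p. min T (h p)) - a"
proof -
  define m where "m = (\<lambda>t. measure J {p. t \<le> h p})"
  have mm [measurable]: "m \<in> borel_measurable borel" unfolding m_def by (rule meas_le_measurable[OF hm])
  define S where "S = {q::real\<times>real\<times>real. a < fst q \<and> fst q < T \<and> fst q \<le> h (snd q)}"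
  have "{q \<in> space (borel \<Otimes>\<^sub>M (borel \<Otimes>\<^sub>M borel)). a < fst q \<and> fst q < T \<and> fst q \<le> h (snd q)} \<in> sets (borel \<Otimes>\<^sub>M (borel \<Otimes>\<^sub>M borel))"
    by measurable
  hence S: "S \<in> sets (lborel \<Otimes>\<^sub>M J)" unfolding S_def sets_lJ by (simp add: space_pair_measure)
  have setJ: "{p. t \<le> h p} \<in> sets J" for t
    by (rule setsJ_I) measurable
  interpret LJ: pair_sigma_finite lborel J
    by (intro pair_sigma_finite.intro lborel.sigma_finite_measure_axioms sfJ)
  have "(\<integral>t. indicator {a<..<T} t * m t \<partial>lborel) = enn2real (\<integral>\<^sup>+t. ennreal (indicator {a<..<T} t * m t) \<partial>lborel)"
    by (rule integral_eq_nn_integral) (auto simp: m_def)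
  also have "(\<integral>\<^sup>+t. ennreal (indicator {a<..<T} t * m t) \<partial>lborel) = (\<integral>\<^sup>+t. (\<integral>\<^sup>+p. indicator S (t, p) \<partial>J) \<partial>lborel)"
  proof (intro nn_integral_cong)
    fix t :: real
    have "(\<integral>\<^sup>+p. indicator S (t, p) \<partial>J) = (\<integral>\<^sup>+p. indicator {a<..<T} t * indicator {p. t \<le> h p} p \<partial>J)"
      by (intro nn_integral_cong) (auto simp: S_def indicator_def)
    also have "\<dots> = indicator {a<..<T} t * emeasure J {p. t \<le> h p}"
      by (rule nn_integral_cmult_indicator[OF setJ])
    also have "\<dots> = ennreal (indicator {a<..<T} t * m t)"
      by (simp add: m_def finite_measure.emeasure_eq_measure[OF finJ] indicator_def)
    finally show "ennreal (indicator {a<..<T} t * m t) = (\<integral>\<^sup>+p. indicator S (t, p) \<partial>J)" ..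
  qed
  also have "(\<integral>\<^sup>+t. (\<integral>\<^sup>+p. indicator S (t, p) \<partial>J) \<partial>lborel) = (\<integral>\<^sup>+p. (\<integral>\<^sup>+t. indicator S (t, p) \<partial>lborel) \<partial>J)"
  proof (rule LJ.Fubini'[symmetric])
    show "(\<lambda>(t, p). indicator S (t, p) :: ennreal) \<in> borel_measurable (lborel \<Otimes>\<^sub>M J)"
      using borel_measurable_indicator[OF S] by (simp add: split_beta')
  qed
  also have "\<dots> = (\<integral>\<^sup>+p. ennreal (min T (h p) - a) \<partial>J)"
  proof (intro nn_integral_cong)
    fix p :: "real \<times> real"
    have "(\<integral>\<^sup>+t. indicator S (t, p) \<partial>lborel) = (\<integral>\<^sup>+t. indicator ({a<..<T} \<inter> {..h p}) t \<partial>lborel)"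
      by (intro nn_integral_cong) (auto simp: S_def indicator_def)
    also have "\<dots> = emeasure lborel ({a<..<T} \<inter> {..h p})" by simp
    also have "\<dots> = ennreal (min T (h p) - a)"
    proof (cases "h p < T")
      case True
      hence "{a<..<T} \<inter> {..h p} = {a<..h p}" by auto
      thus ?thesis using True hge[of p] by simp
    next
      case False
      hence "{a<..<T} \<inter> {..h p} = {a<..<T}" by auto
      thus ?thesis using False aT by simp
    qed
    finally show "(\<integral>\<^sup>+t. indicator S (t, p) \<partial>lborel) = ennreal (min T (h p) - a)" .
  qed
  also have "enn2real \<dots> = integral\<^sup>L J (\<lambda>p. min T (h p) - a)"
    by (rule integral_eq_nn_integral[symmetric]) (auto simp: bmeasJ intro: hge aT)
  also have "\<dots> = integral\<^sup>L J (\<lambda>p. min T (h p)) - integral\<^sup>L J (\<lambda>p. a)"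
  proof (rule Bochner_Integration.integral_diff)
    show "integrable J (\<lambda>p. min T (h p))"
    proof (rule finite_measure.integrable_const_bound[OF finJ, where B=T])
      show "AE x in J. norm (min T (h x)) \<le> T" using hge a0 aT
        by (intro AE_I2) (smt (verit) real_norm_def)
      show "(\<lambda>p. min T (h p)) \<in> borel_measurable J" unfolding bmeasJ by measurable
    qed
  qed simp
  also have "integral\<^sup>L J (\<lambda>p. a) = a" using measJ_1 by simp
  finally show ?thesis unfolding m_def .
qed

end

context symd begin

lemma phq_set: "{p. 0 \<le> fst p \<and> 0 \<le> snd p \<and> x' * fst p \<le> y' * snd p} \<in> sets J"
  by (rule setsJ_I) measurable

lemma int_iv:
  fixes \<alpha> a T :: real
  assumes \<alpha>: "\<alpha> > 0" and a: "0 < a" and aT: "a \<le> T"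
  shows "(LBINT t=a..T. phq ((t - a) powr (1 / \<alpha>)) (a powr (1 / \<alpha>)))
       = 1 / 4 * integral\<^sup>L J (\<lambda>p. min T (a * (1 + \<bar>snd p / fst p\<bar> powr \<alpha>))) - a / 4"
proof -
  define h where "h = (\<lambda>p::real\<times>real. a * (1 + \<bar>snd p / fst p\<bar> powr \<alpha>))"
  have hm: "h \<in> borel_measurable (borel \<Otimes>\<^sub>M borel)" unfolding h_def by measurable
  have hge: "a \<le> h p" for p unfolding h_def using a by simp
  define m where "m = (\<lambda>t. measure J {p. t \<le> h p})"
  have step: "phq ((t - a) powr (1 / \<alpha>)) (a powr (1 / \<alpha>)) = 1 / 4 * m t" if t: "a < t" for t
  proof -
    have s1: "{p. t \<le> h p} \<in> sets J" unfolding h_def by (rule setsJ_I) measurable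
    have s2: "{p. 0 < fst p \<and> 0 < snd p} \<in> sets J" by (rule setsJ_I) measurable
    have "phq ((t - a) powr (1 / \<alpha>)) (a powr (1 / \<alpha>)) = measure J ({p. t \<le> h p} \<inter> {p. 0 < fst p \<and> 0 < snd p})"
      unfolding phq_def
    proof (rule measure_eq_AE)
      show "AE p in J. (p \<in> {p. 0 \<le> fst p \<and> 0 \<le> snd p \<and> (t - a) powr (1 / \<alpha>) * fst p \<le> a powr (1 / \<alpha>) * snd p}) =
          (p \<in> {p. t \<le> h p} \<inter> {p. 0 < fst p \<and> 0 < snd p})"
        using AE_not_axes
      proof eventually_elim
        case (elim p)
        show ?case
        proof (cases "0 < fst p \<and> 0 < snd p")
          case True
          have "(t - a) powr (1 / \<alpha>) * fst p \<le> a powr (1 / \<alpha>) * snd p \<longleftrightarrow> t - a \<le> a * (snd p / fst p) powr \<alpha>"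
            using True t a \<alpha> by (intro key_powr) auto
          also have "\<dots> \<longleftrightarrow> t \<le> h p" unfolding h_def using True by (simp add: algebra_simps)
          finally show ?thesis using True by auto
        next
          case False
          thus ?thesis using elim by auto
        qed
      qed
      show "{p. 0 \<le> fst p \<and> 0 \<le> snd p \<and> (t - a) powr (1 / \<alpha>) * fst p \<le> a powr (1 / \<alpha>) * snd p} \<in> sets J"
        by (rule phq_set)
      show "{p. t \<le> h p} \<inter> {p. 0 < fst p \<and> 0 < snd p} \<in> sets J" using s1 s2 by blast
    qed
    also have "\<dots> = integral\<^sup>L J (\<lambda>p. indicator {p. t \<le> h p} p * indicator {p. fst p > 0 \<and> snd p > 0} p)"
    proof -
      have "(\<lambda>p. indicator {p. t \<le> h p} p * indicator {p. fst p > 0 \<and> snd p > 0} p) = (indicator ({p. t \<le> h p} \<inter> {p. 0 < fst p \<and> 0 < snd p}) :: _ \<Rightarrow> real)"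
        by (rule ext) (simp only: indicator_inter_arith)
      thus ?thesis by simp
    qed
    also have "\<dots> = integral\<^sup>L J (indicator {p. t \<le> h p}) / 4"
    proof (rule quadrant)
      have "{p \<in> space (borel \<Otimes>\<^sub>M borel). t \<le> h p} \<in> sets (borel \<Otimes>\<^sub>M borel)" unfolding h_def by measurable
      thus "indicator {p. t \<le> h p} \<in> borel_measurable (borel \<Otimes>\<^sub>M borel)"
        by (intro borel_measurable_indicator) (simp add: space_pair_measure)
      show "integrable J (indicator {p. t \<le> h p} :: _ \<Rightarrow> real)"
        by (rule integrable_real_indicator[OF s1]) (use finite_measure.emeasure_finite[OF finJ, of "{p. t \<le> h p}"] in \<open>simp add: less_top[symmetric]\<close>)
      show "\<And>x y. indicator {p. t \<le> h p} (- x, y) = (indicator {p. t \<le> h p} (x, y) :: real)"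
        by (simp add: h_def indicator_def)
      show "\<And>x y. indicator {p. t \<le> h p} (x, - y) = (indicator {p. t \<le> h p} (x, y) :: real)"
        by (simp add: h_def indicator_def)
    qed
    also have "\<dots> = 1 / 4 * m t" unfolding m_def by simp
    finally show ?thesis .
  qed
  have ei: "einterval (ereal a) (ereal T) = {a<..<T}" by (auto simp: einterval_def)
  have "(LBINT t=a..T. phq ((t - a) powr (1 / \<alpha>)) (a powr (1 / \<alpha>)))
      = (\<integral>t. indicator {a<..<T} t *\<^sub>R phq ((t - a) powr (1 / \<alpha>)) (a powr (1 / \<alpha>)) \<partial>lborel)"
    using aT ei by (simp add: interval_lebesgue_integral_def set_lebesgue_integral_def)
  also have "\<dots> = (\<integral>t. 1 / 4 * (indicator {a<..<T} t * m t) \<partial>lborel)"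
    by (intro Bochner_Integration.integral_cong refl) (auto simp: indicator_def step)
  also have "\<dots> = 1 / 4 * (\<integral>t. indicator {a<..<T} t * m t \<partial>lborel)" by simp
  also have "(\<integral>t. indicator {a<..<T} t * m t \<partial>lborel) = integral\<^sup>L J (\<lambda>p. min T (h p)) - a"
    unfolding m_def by (rule layer[OF hm hge aT]) (use a in simp)
  finally show ?thesis unfolding h_def by (simp add: algebra_simps)
qed

end

theorem lemma9:
  fixes M :: "'a measure" and Z Z' :: "'a \<Rightarrow> real"
    and \<alpha> T x y a b :: real
  assumes "prob_space M"
    and "0 < \<alpha>" and "\<alpha> \<le> 2"
    and "Z \<in> borel_measurable M" and "Z' \<in> borel_measurable M"
    and "prob_space.indep_var M borel Z borel Z'"
    and "\<And>u. char (distr M borel Z) u = exp (- complex_of_real (\<bar>u\<bar> powr \<alpha>))"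
    and "\<And>u. char (distr M borel Z') u = exp (- complex_of_real (\<bar>u\<bar> powr \<alpha>))"
    and "0 < T"
    and "0 < x" and "0 < y" and "0 < b"
    and "0 < a" and "a \<le> T"
  shows "stable_phi M Z Z' \<alpha> x y + stable_phi M Z Z' \<alpha> y x = 1 / 4
    \<and> stable_phi M Z Z' \<alpha> (a * x) (a * y) = stable_phi M Z Z' \<alpha> x y
    \<and> (LBINT t=0..a. stable_phi M Z Z' \<alpha> (a - t) t) = a / 8
    \<and> (LBINT t=a..T. stable_phi M Z Z' \<alpha> (t - a) a) =
           1 / 4 * prob_space.expectation M
                     (\<lambda>\<omega>. min T (a * inverse (stable_D Z Z' \<alpha> \<omega>))) - a / 4"
proof -
  note ps = assms(1) and \<alpha>0 = assms(2) and Zm = assms(4) and Z'm = assms(5) and ind = assms(6)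
    and chZ = assms(7) and chZ' = assms(8) and a0 = assms(13) and aT = assms(14)
  interpret prob_space M by (rule ps)
  define \<mu> where "\<mu> = distr M borel Z"
  have rd: "real_distribution \<mu>" unfolding \<mu>_def using Zm by (intro real_distribution_distr) simp
  have rd': "real_distribution (distr M borel Z')" using Z'm by (intro real_distribution_distr) simp
  have \<mu>': "distr M borel Z' = \<mu>"
    by (rule Levy_uniqueness[OF rd' rd]) (use chZ chZ' in \<open>simp add: \<mu>_def fun_eq_iff\<close>)
  interpret R: real_distribution \<mu> by (rule rd)
  have rdm: "real_distribution (distr \<mu> borel uminus)" by (intro R.real_distribution_distr) simp
  have symm: "distr \<mu> borel uminus = \<mu>"
  proof (rule Levy_uniqueness[OF rdm rd])
    show "char (distr \<mu> borel uminus) = char \<mu>"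
    proof
      fix u
      have "char (distr \<mu> borel uminus) u = char \<mu> (- u)"
        unfolding char_def by (subst integral_distr) auto
      also have "\<dots> = char \<mu> u" using chZ unfolding \<mu>_def by simp
      finally show "char (distr \<mu> borel uminus) u = char \<mu> u" .
    qed
  qed
  have atoms: "measure \<mu> {c} = 0" for c
    by (rule no_atoms[OF rd \<alpha>0]) (use chZ in \<open>simp add: \<mu>_def\<close>)
  interpret S: symd \<mu> by unfold_locales (use symm atoms in auto)
  define ZZ where "ZZ = (\<lambda>\<omega>. (Z \<omega>, Z' \<omega>))"
  have ZZm: "ZZ \<in> measurable M (borel \<Otimes>\<^sub>M borel)" unfolding ZZ_def using Zm Z'm by measurable
  have law: "distr M (borel \<Otimes>\<^sub>M borel) ZZ = \<mu> \<Otimes>\<^sub>M \<mu>"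
    using ind unfolding indep_var_distribution_eq ZZ_def by (simp add: \<mu>_def \<mu>'[unfolded \<mu>_def])
  define r where "r = 1 / \<alpha>"
  have phi: "stable_phi M Z Z' \<alpha> u v = S.phq (u powr r) (v powr r)" for u v
  proof -
    let ?S = "{p::real\<times>real. 0 \<le> fst p \<and> 0 \<le> snd p \<and> u powr r * fst p \<le> v powr r * snd p}"
    have Ss: "?S \<in> sets (borel \<Otimes>\<^sub>M borel)" using S.phq_set S.sets_J by blast
    have "S.phq (u powr r) (v powr r) = measure (distr M (borel \<Otimes>\<^sub>M borel) ZZ) ?S"
      unfolding S.phq_def law ..
    also have "\<dots> = measure M (ZZ -` ?S \<inter> space M)" by (rule measure_distr[OF ZZm Ss])
    also have "ZZ -` ?S \<inter> space M = {\<omega> \<in> space M. Z \<omega> \<ge> 0 \<and> Z' \<omega> \<ge> 0 \<and>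
                 u powr (1 / \<alpha>) * Z \<omega> \<le> v powr (1 / \<alpha>) * Z' \<omega>}"
      unfolding ZZ_def r_def by auto
    finally show ?thesis unfolding stable_phi_def by simp
  qed
  have part1: "stable_phi M Z Z' \<alpha> x y + stable_phi M Z Z' \<alpha> y x = 1 / 4"
    unfolding phi using assms(10) by (intro S.phq_sum) simp
  have part2: "stable_phi M Z Z' \<alpha> (a * x) (a * y) = stable_phi M Z Z' \<alpha> x y"
  proof -
    have ap: "a powr (1 / \<alpha>) > 0" using a0 by simp
    have "(a * x) powr (1 / \<alpha>) * z \<le> (a * y) powr (1 / \<alpha>) * z' \<longleftrightarrow> x powr (1 / \<alpha>) * z \<le> y powr (1 / \<alpha>) * z'"
      for z z' :: real
      using a0 assms(10,11) ap by (simp add: powr_mult mult.assoc)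
    thus ?thesis unfolding stable_phi_def by simp
  qed
  have part3: "(LBINT t=0..a. stable_phi M Z Z' \<alpha> (a - t) t) = a / 8"
    unfolding phi by (rule S.int_iii[OF a0])
  have part4: "(LBINT t=a..T. stable_phi M Z Z' \<alpha> (t - a) a) =
           1 / 4 * expectation (\<lambda>\<omega>. min T (a * inverse (stable_D Z Z' \<alpha> \<omega>))) - a / 4"
  proof -
    define g where "g = (\<lambda>p::real\<times>real. min T (a * (1 + \<bar>snd p / fst p\<bar> powr \<alpha>)))"
    have gm: "g \<in> borel_measurable (borel \<Otimes>\<^sub>M borel)" unfolding g_def by measurable
    have "expectation (\<lambda>\<omega>. min T (a * inverse (stable_D Z Z' \<alpha> \<omega>))) = expectation (\<lambda>\<omega>. g (ZZ \<omega>))"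
      unfolding g_def ZZ_def stable_D_def by simp
    also have "\<dots> = integral\<^sup>L (distr M (borel \<Otimes>\<^sub>M borel) ZZ) g"
      by (rule integral_distr[OF ZZm gm, symmetric])
    also have "\<dots> = integral\<^sup>L (\<mu> \<Otimes>\<^sub>M \<mu>) g" unfolding law ..
    finally have E: "expectation (\<lambda>\<omega>. min T (a * inverse (stable_D Z Z' \<alpha> \<omega>))) = integral\<^sup>L (\<mu> \<Otimes>\<^sub>M \<mu>) g" .
    show ?thesis unfolding phi E g_def r_def by (rule S.int_iv[OF \<alpha>0 a0 aT])
  qed
  show ?thesis using part1 part2 part3 part4 by blast
qed


end
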